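(* For every integer $n\ge2$, $\gamma_{tr3}(P_2\square P_n)=2n$.
   Context: $P_m$ denotes the directed path with vertex set $\{0,1,\dots,m-1\}$ and arcs $(i,i+1)$ for $0\le i\le m-2$. The Cartesian product $D_1\square D_2$ has vertex set $V(D_1)\times V(D_2)$, with an arc from $(x_1,y_1)$ to $(x_2,y_2)$ iff either $(x_1,x_2)$ is an arc of $D_1$ and $y_1=y_2$, or $x_1=x_2$ and $(y_1,y_2)$ is an arc of $D_2$. For a digraph $D$ and positive integer $k$, a $k$-rainbow dominating function on $D$ is $f:V(D)\to\mathcal P(\{1,\dots,k\})$ such that every $v$ with $f(v)=\emptyset$ satisfies $\bigcup_{u\in N^-(v)}f(u)=\{1,\dots,k\}$, where $N^-(v)$ is the set of in-neighbors of $v$; its weight is $\sum_v|f(v)|$. It is total if additionally the subdigraph induced by $\{v:f(v)\ne\emptyset\}$ has no isolated vertex (a vertex with neither in- nor out-neighbors in it). $\gamma_{trk}(D)$ is the minimum weight of a total $k$-rainbow dominating function. *)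

theory Defs
  imports Main
begin

record 'a digraph =
  verts :: "'a set"
  arcs  :: "('a \<times> 'a) set"

definition dipath :: "nat \<Rightarrow> nat digraph" where
  "dipath m = \<lparr> verts = {0..<m}, arcs = {(i, i+1) | i. i + 1 < m} \<rparr>"

definition cart_prod :: "'a digraph \<Rightarrow> 'b digraph \<Rightarrow> ('a \<times> 'b) digraph" where
  "cart_prod D1 D2 = \<lparr> verts = verts D1 \<times> verts D2,
     arcs = {((x1,y1),(x2,y2)) | x1 y1 x2 y2.
               y1 \<in> verts D2 \<and> y2 \<in> verts D2 \<and> x1 \<in> verts D1 \<and> x2 \<in> verts D1 \<and>
               (((x1,x2) \<in> arcs D1 \<and> y1 = y2) \<or> (x1 = x2 \<and> (y1,y2) \<in> arcs D2))} \<rparr>"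

definition in_nbrs :: "'a digraph \<Rightarrow> 'a \<Rightarrow> 'a set" where
  "in_nbrs D v = {u \<in> verts D. (u, v) \<in> arcs D}"

text \<open>k-rainbow dominating function (values outside the vertex set are irrelevant; we
  require them to be empty so that the weight is well-defined).\<close>
definition rainbow_dom :: "nat \<Rightarrow> 'a digraph \<Rightarrow> ('a \<Rightarrow> nat set) \<Rightarrow> bool" where
  "rainbow_dom k D f \<longleftrightarrow>
     (\<forall>v \<in> verts D. f v \<subseteq> {1..k}) \<and> (\<forall>v. v \<notin> verts D \<longrightarrow> f v = {}) \<and>
     (\<forall>v \<in> verts D. f v = {} \<longrightarrow> (\<Union>u \<in> in_nbrs D v. f u) = {1..k})"

text \<open>Total: the subdigraph induced by vertices with nonempty label has no isolated vertex.\<close>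
definition total_rainbow_dom :: "nat \<Rightarrow> 'a digraph \<Rightarrow> ('a \<Rightarrow> nat set) \<Rightarrow> bool" where
  "total_rainbow_dom k D f \<longleftrightarrow> rainbow_dom k D f \<and>
     (\<forall>v \<in> verts D. f v \<noteq> {} \<longrightarrow>
        (\<exists>u \<in> verts D. f u \<noteq> {} \<and> ((u, v) \<in> arcs D \<or> (v, u) \<in> arcs D)))"

definition rd_weight :: "'a digraph \<Rightarrow> ('a \<Rightarrow> nat set) \<Rightarrow> nat" where
  "rd_weight D f = (\<Sum>v \<in> verts D. card (f v))"

definition gamma_tr :: "nat \<Rightarrow> 'a digraph \<Rightarrow> nat" where
  "gamma_tr k D = (LEAST w. \<exists>f. total_rainbow_dom k D f \<and> rd_weight D f = w)"

end

theory Submission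
  imports Defs
begin

abbreviation G :: "nat \<Rightarrow> (nat \<times> nat) digraph" where
  "G n \<equiv> cart_prod (dipath 2) (dipath n)"

lemma verts_G: "verts (G n) = {0..<2} \<times> {0..<n}"
  by (simp add: cart_prod_def dipath_def)

lemma arcs_G: "((x1,y1),(x2,y2)) \<in> arcs (G n) \<longleftrightarrow>
   x1 < 2 \<and> x2 < 2 \<and> y1 < n \<and> y2 < n \<and> ((x2 = x1+1 \<and> y1 = y2) \<or> (x1 = x2 \<and> y2 = y1+1))"
  by (auto simp: cart_prod_def dipath_def)

lemma in_nbrs_00: "in_nbrs (G n) (0,0) = {}"
  by (auto simp: in_nbrs_def verts_G arcs_G)

lemma in_nbrs_0: "0 < y \<Longrightarrow> y < n \<Longrightarrow> in_nbrs (G n) (0,y) = {(0,y-1)}"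
  by (auto simp: in_nbrs_def verts_G arcs_G)

lemma in_nbrs_1: "y < n \<Longrightarrow> in_nbrs (G n) (1,y) = {(0,y)} \<union> (if 0 < y then {(1,y-1)} else {})"
  by (auto simp: in_nbrs_def verts_G arcs_G)

lemma card_le3:
  assumes "rainbow_dom 3 (G n) f" shows "card (f v) \<le> 3"
proof (cases "v \<in> verts (G n)")
  case True
  then have "f v \<subseteq> {1..3}" using assms by (auto simp: rainbow_dom_def)
  then show ?thesis using card_mono[of "{1..3::nat}" "f v"] by simp
next
  case False then have "f v = {}" using assms unfolding rainbow_dom_def by blast
  then show ?thesis by simp
qed

lemma fin_f:
  assumes "rainbow_dom 3 (G n) f" shows "finite (f v)"
proof (cases "v \<in> verts (G n)")
  case True
  then have "f v \<subseteq> {1..3}" using assms by (auto simp: rainbow_dom_def)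
  then show ?thesis using finite_subset by blast
next
  case False then have "f v = {}" using assms unfolding rainbow_dom_def by blast
  then show ?thesis by simp
qed

lemma R00: assumes "rainbow_dom 3 (G n) f" "0 < n" shows "f (0,0) \<noteq> {}"
proof
  assume "f (0,0) = {}"
  with assms have "(\<Union>u \<in> in_nbrs (G n) (0,0). f u) = {1..3}"
    unfolding rainbow_dom_def verts_G by auto
  then show False by (simp add: in_nbrs_00)
qed

lemma R0: assumes "rainbow_dom 3 (G n) f" "0 < y" "y < n" "f (0,y) = {}"
  shows "card (f (0,y-1)) = 3"
proof -
  from assms have "(\<Union>u \<in> in_nbrs (G n) (0,y). f u) = {1..3}"
    unfolding rainbow_dom_def verts_G by auto
  then have "f (0,y-1) = {1..3}" using assms by (simp add: in_nbrs_0)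
  then show ?thesis by simp
qed

lemma R1: assumes "rainbow_dom 3 (G n) f" "y < n" "f (1,y) = {}"
  shows "card (f (0,y)) + (if 0 < y then card (f (1,y-1)) else 0) \<ge> 3"
proof -
  from assms have U: "(\<Union>u \<in> in_nbrs (G n) (1,y). f u) = {1..3}"
    unfolding rainbow_dom_def verts_G by auto
  have fa: "finite (f (0,y))" "finite (f (1,y-1))" using fin_f[OF assms(1)] by auto
  show ?thesis
  proof (cases "0 < y")
    case True
    have "in_nbrs (G n) (1,y) = {(0,y),(1,y-1)}" using in_nbrs_1[OF assms(2)] True by auto
    with U have "f (0,y) \<union> f (1,y-1) = {1..3}" by simp
    then have "card (f (0,y) \<union> f (1,y-1)) = 3" by simp
    moreover have "card (f (0,y) \<union> f (1,y-1)) \<le> card (f (0,y)) + card (f (1,y-1))"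
      by (rule card_Un_le)
    ultimately show ?thesis using True by simp
  next
    case False
    have "in_nbrs (G n) (1,y) = {(0,y)}" using in_nbrs_1[OF assms(2)] False by auto
    with U have "f (0,y) = {1..3}" by simp
    then show ?thesis by simp
  qed
qed

lemma lower:
  assumes rd: "rainbow_dom 3 (G n) f" and n: "0 < n"
  shows "2 * n \<le> rd_weight (G n) f"
proof -
  define a where "a y = int (card (f (0,y)))" for y
  define b where "b y = int (card (f (1,y)))" for y
  define E0 where "E0 z = (if z < n \<and> f (0,z) = {} then 1 else 0::int)" for z
  define E1 where "E1 z = (if z < n \<and> f (1,z) = {} then 1 else 0::int)" for z
  define Gc where "Gc z = (if z < n \<and> f (1,z) = {} \<and> a z \<ge> 2 then 1 else 0::int)" for z
  define H where "H z = (if z < n \<and> f (1,z) = {} \<and> a z < 2 then 1 else 0::int)" for z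
  have c3: "\<And>v. card (f v) \<le> 3" using card_le3[OF rd] .
  have fin: "\<And>v. finite (f v)" using fin_f[OF rd] .
  have E00: "E0 0 = 0" using R00[OF rd n] by (simp add: E0_def)
  have H0: "H 0 = 0"
  proof -
    have "f (1,0) = {} \<Longrightarrow> a 0 \<ge> 2" using R1[OF rd n] by (simp add: a_def)
    then show ?thesis by (auto simp: H_def)
  qed
  have E0n: "E0 n = 0" "H n = 0" by (auto simp: E0_def H_def)
  have E1s: "\<And>z. E1 z = Gc z + H z" by (auto simp: E1_def Gc_def H_def)
  have I0: "a y - 1 + E0 y \<ge> E0 (Suc y) + Gc y" if y: "y < n" for y
  proof (cases "f (0,y) = {}")
    case True
    have "y \<noteq> 0" using R00[OF rd n] True by auto
    have "E0 (Suc y) = 0"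
    proof (rule ccontr)
      assume "E0 (Suc y) \<noteq> 0"
      then have "Suc y < n" "f (0, Suc y) = {}" by (auto simp: E0_def split: if_splits)
      then have "card (f (0,y)) = 3" using R0[OF rd, of "Suc y"] by simp
      with True show False by simp
    qed
    then show ?thesis using True y by (simp add: a_def E0_def Gc_def)
  next
    case False
    then have a1: "a y \<ge> 1" using fin[of "(0,y)"] by (simp add: a_def card_gt_0_iff Suc_le_eq)
    show ?thesis
    proof (cases "E0 (Suc y) = 0")
      case True then show ?thesis using False a1 by (auto simp: E0_def Gc_def)
    next
      case F2: False
      then have "Suc y < n" "f (0, Suc y) = {}" by (auto simp: E0_def split: if_splits)
      then have "a y = 3" using R0[OF rd, of "Suc y"] by (simp add: a_def)
      moreover have "E0 (Suc y) \<le> 1" "Gc y \<le> 1" by (auto simp: E0_def Gc_def)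
      ultimately show ?thesis using False by (simp add: E0_def)
    qed
  qed
  have I1: "b y - 1 + E1 y \<ge> H (Suc y)" if y: "y < n" for y
  proof (cases "H (Suc y) = 0")
    case True
    then show ?thesis using fin[of "(1,y)"] y
      by (auto simp: b_def E1_def card_gt_0_iff Suc_le_eq)
  next
    case False
    then have s: "Suc y < n" "f (1, Suc y) = {}" "a (Suc y) < 2" by (auto simp: H_def split: if_splits)
    have "card (f (0,Suc y)) + card (f (1,y)) \<ge> 3" using R1[OF rd s(1) s(2)] by simp
    then have "b y \<ge> 2" using s(3) by (simp add: a_def b_def)
    moreover have "H (Suc y) \<le> 1" "E1 y \<ge> 0" by (auto simp: H_def E1_def)
    ultimately show ?thesis by simp
  qed
  have "(\<Sum>y<n. a y + b y - 2) \<ge> (\<Sum>y<n. (E0 (Suc y) - E0 y) + (H (Suc y) - H y))"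
  proof (rule sum_mono)
    fix y assume "y \<in> {..<n}"
    then have "y < n" by simp
    from I0[OF this] I1[OF this] E1s[of y] show "(E0 (Suc y) - E0 y) + (H (Suc y) - H y) \<le> a y + b y - 2"
      by linarith
  qed
  also have "(\<Sum>y<n. (E0 (Suc y) - E0 y) + (H (Suc y) - H y)) = 0"
    by (simp add: sum.distrib sum_lessThan_telescope E00 H0 E0n)
  finally have "(\<Sum>y<n. a y + b y) \<ge> 2 * int n"
    by (simp add: sum_subtractf)
  moreover have "rd_weight (G n) f = (\<Sum>y<n. card (f (0,y)) + card (f (1,y)))"
  proof -
    have "rd_weight (G n) f = (\<Sum>x\<in>{0..<2::nat}. \<Sum>y\<in>{0..<n}. card (f (x,y)))"
      unfolding rd_weight_def verts_G by (simp add: sum.cartesian_product)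
    also have "\<dots> = (\<Sum>y<n. card (f (0,y)) + card (f (1,y)))"
      by (simp add: numeral_2_eq_2 sum.distrib atLeast0LessThan)
    finally show ?thesis .
  qed
  moreover have "int (\<Sum>y<n. card (f (0,y)) + card (f (1,y))) = (\<Sum>y<n. a y + b y)"
    by (simp add: a_def b_def of_nat_sum)
  ultimately show ?thesis by linarith
qed

theorem proposition4p5:
  fixes n :: nat
  assumes "n \<ge> 2"
  shows "gamma_tr 3 (cart_prod (dipath 2) (dipath n)) = 2 * n"
proof -
  define f where "f v = (if v \<in> verts (G n) then {1::nat} else {})" for v
  have tot: "total_rainbow_dom 3 (G n) f"
    unfolding total_rainbow_dom_def rainbow_dom_def
  proof (intro conjI ballI allI impI)
    fix v assume v: "v \<in> verts (G n)" "f v \<noteq> {}"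
    obtain x y where xy: "v = (x,y)" by force
    with v have "x < 2" "y < n" by (auto simp: verts_G)
    then show "\<exists>u\<in>verts (G n). f u \<noteq> {} \<and> ((u, v) \<in> arcs (G n) \<or> (v, u) \<in> arcs (G n))"
      using xy by (intro bexI[of _ "(1-x,y)"]) (auto simp: f_def verts_G arcs_G)
  qed (auto simp: f_def)
  have w: "rd_weight (G n) f = 2 * n"
    unfolding rd_weight_def by (simp add: f_def verts_G)
  show ?thesis
    unfolding gamma_tr_def
  proof (rule Least_equality)
    show "\<exists>f. total_rainbow_dom 3 (G n) f \<and> rd_weight (G n) f = 2 * n" using tot w by blast
  next
    fix w assume "\<exists>f. total_rainbow_dom 3 (G n) f \<and> rd_weight (G n) f = w"
    then obtain g where "total_rainbow_dom 3 (G n) g" "rd_weight (G n) g = w" by blast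
    then show "2 * n \<le> w" using lower[of n g] assms by (auto simp: total_rainbow_dom_def)
  qed
qed

end
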